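(* Let $G,\sigma\ge0$ with $G+\sigma>0$, $\lambda>0$, $C_{\mathbf{x}}\ge0$, and $\varepsilon>0$ with $\varepsilon\le\frac72(G+\sigma)$. Set $\beta_\star=1-\left(\frac{\varepsilon}{7(G+\sigma)}\right)^2$, $D_\star=\frac14\lambda^{-1/2}\varepsilon^{1/2}\left(1+\frac{49(G+\sigma)^2}{\varepsilon^2}\sqrt{C_{\mathbf{x}}}\right)^{-1}$, $\mu_\star=2\lambda^{1/2}\varepsilon^{1/2}\left(1+\frac{49(G+\sigma)^2}{\varepsilon^2}\sqrt{C_{\mathbf{x}}}\right)$, $\eta_\star=\frac{2}{G+\sigma}D_\star\sqrt{1-\beta_\star}$ and $\zeta_\star=\frac{\beta_\star}{1+\eta_\star\mu_\star}$. Then $1-\zeta_\star=\Theta\!\left(\frac{\varepsilon^2}{(G+\sigma)^2}\right)$ (with absolute constants). Consequently, every $\kappa\in[\zeta_\star,1]$ satisfies $1-\Theta\!\left(\frac{\varepsilon^2}{(G+\sigma)^2}\right)\le\kappa\le1$, and the step size $\gamma=\frac{\eta_\star}{1-\zeta_\star}$ equals $\Theta\!\left(\frac{(G+\sigma)^2}{\varepsilon^2}\right)\cdot\eta_\star$.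
   Context: In the paper these are the parameters of the conversion scheme equivalent to schedule-free SGD, where $C_{\mathbf{x}}$ is the iterate stability factor of the run, $\kappa_t$ is drawn uniformly from $[\zeta_\star,1]$ and $\gamma$ is the step size of the base SGD trajectory. *)

theory Defs
  imports Complex_Main
begin

definition beta_star :: "real \<Rightarrow> real \<Rightarrow> real \<Rightarrow> real" where
  "beta_star G \<sigma> \<epsilon> = 1 - (\<epsilon> / (7 * (G + \<sigma>)))^2"

definition D_star :: "real \<Rightarrow> real \<Rightarrow> real \<Rightarrow> real \<Rightarrow> real \<Rightarrow> real" where
  "D_star G \<sigma> lam Cx \<epsilon> =
     (1/4) * lam powr (-1/2) * sqrt \<epsilon> / (1 + 49 * (G + \<sigma>)^2 / \<epsilon>^2 * sqrt Cx)"

definition mu_star :: "real \<Rightarrow> real \<Rightarrow> real \<Rightarrow> real \<Rightarrow> real \<Rightarrow> real" where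
  "mu_star G \<sigma> lam Cx \<epsilon> =
     2 * sqrt lam * sqrt \<epsilon> * (1 + 49 * (G + \<sigma>)^2 / \<epsilon>^2 * sqrt Cx)"

definition eta_star :: "real \<Rightarrow> real \<Rightarrow> real \<Rightarrow> real \<Rightarrow> real \<Rightarrow> real" where
  "eta_star G \<sigma> lam Cx \<epsilon> =
     2 / (G + \<sigma>) * D_star G \<sigma> lam Cx \<epsilon> * sqrt (1 - beta_star G \<sigma> \<epsilon>)"

definition zeta_star :: "real \<Rightarrow> real \<Rightarrow> real \<Rightarrow> real \<Rightarrow> real \<Rightarrow> real" where
  "zeta_star G \<sigma> lam Cx \<epsilon> =
     beta_star G \<sigma> \<epsilon> / (1 + eta_star G \<sigma> lam Cx \<epsilon> * mu_star G \<sigma> lam Cx \<epsilon>)"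

end

theory Submission
  imports Defs
begin

lemma key:
  assumes "0 < G + \<sigma>" "0 < lam" "0 \<le> Cx" "0 < \<epsilon>"
  shows "eta_star G \<sigma> lam Cx \<epsilon> * mu_star G \<sigma> lam Cx \<epsilon> = (\<epsilon>^2 / (G+\<sigma>)^2) / 7"
    and "eta_star G \<sigma> lam Cx \<epsilon> > 0"
    and "zeta_star G \<sigma> lam Cx \<epsilon> = (1 - (\<epsilon>^2 / (G+\<sigma>)^2)/49) / (1 + (\<epsilon>^2 / (G+\<sigma>)^2) / 7)"
proof -
  define S where "S = G + \<sigma>"
  define A where "A = 1 + 49 * S^2 / \<epsilon>^2 * sqrt Cx"
  have S: "S > 0" using assms S_def by auto
  have A: "A > 0" using assms S unfolding A_def by (simp add: add_pos_nonneg)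
  have sq: "sqrt (1 - beta_star G \<sigma> \<epsilon>) = \<epsilon> / (7 * S)"
    unfolding beta_star_def S_def[symmetric] using S assms by simp
  have pl: "lam powr (-1/2) * sqrt lam = 1"
    using assms by (simp add: powr_half_sqrt[symmetric] powr_add[symmetric])
  have D: "D_star G \<sigma> lam Cx \<epsilon> = (1/4) * lam powr (-1/2) * sqrt \<epsilon> / A"
    unfolding D_star_def A_def S_def ..
  have M: "mu_star G \<sigma> lam Cx \<epsilon> = 2 * sqrt lam * sqrt \<epsilon> * A"
    unfolding mu_star_def A_def S_def ..
  have E: "eta_star G \<sigma> lam Cx \<epsilon> = 2 / S * ((1/4) * lam powr (-1/2) * sqrt \<epsilon> / A) * (\<epsilon> / (7 * S))"
    unfolding eta_star_def D sq S_def ..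
  show e: "eta_star G \<sigma> lam Cx \<epsilon> * mu_star G \<sigma> lam Cx \<epsilon> = (\<epsilon>^2 / (G+\<sigma>)^2) / 7"
  proof -
    have "eta_star G \<sigma> lam Cx \<epsilon> * mu_star G \<sigma> lam Cx \<epsilon>
       = (lam powr (-1/2) * sqrt lam) * (sqrt \<epsilon> * sqrt \<epsilon>) * \<epsilon> / (7 * S^2) * (A / A)"
      unfolding E M using S A by (simp add: field_simps power2_eq_square)
    also have "\<dots> = \<epsilon>^2 / S^2 / 7" using A assms pl by (simp add: power2_eq_square)
    finally show ?thesis by (simp add: S_def)
  qed
  show "eta_star G \<sigma> lam Cx \<epsilon> > 0" unfolding E using S A assms by simp
  show "zeta_star G \<sigma> lam Cx \<epsilon> = (1 - (\<epsilon>^2 / (G+\<sigma>)^2)/49) / (1 + (\<epsilon>^2 / (G+\<sigma>)^2) / 7)"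
  proof -
    have "(\<epsilon> / (7 * (G+\<sigma>)))^2 = (\<epsilon>^2/(G+\<sigma>)^2)/49"
      by (simp add: power_divide power2_eq_square algebra_simps)
    thus ?thesis unfolding zeta_star_def e beta_star_def by simp
  qed
qed

lemma main:
  fixes G \<sigma> lam Cx \<epsilon> :: real
  assumes h: "0 \<le> G \<and> 0 \<le> \<sigma> \<and> 0 < G + \<sigma> \<and> 0 < lam \<and> 0 \<le> Cx \<and> 0 < \<epsilon> \<and> \<epsilon> \<le> 7/2 * (G + \<sigma>)"
  shows "1/20 * (\<epsilon>^2 / (G + \<sigma>)^2) \<le> 1 - zeta_star G \<sigma> lam Cx \<epsilon> \<and>
    1 - zeta_star G \<sigma> lam Cx \<epsilon> \<le> 1/6 * (\<epsilon>^2 / (G + \<sigma>)^2) \<and>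
    (\<forall>\<kappa>. zeta_star G \<sigma> lam Cx \<epsilon> \<le> \<kappa> \<and> \<kappa> \<le> 1 \<longrightarrow> 1 - 1/6 * (\<epsilon>^2 / (G + \<sigma>)^2) \<le> \<kappa> \<and> \<kappa> \<le> 1) \<and>
    6 / (\<epsilon>^2 / (G + \<sigma>)^2) * eta_star G \<sigma> lam Cx \<epsilon> \<le> eta_star G \<sigma> lam Cx \<epsilon> / (1 - zeta_star G \<sigma> lam Cx \<epsilon>) \<and>
    eta_star G \<sigma> lam Cx \<epsilon> / (1 - zeta_star G \<sigma> lam Cx \<epsilon>) \<le> 17 / (\<epsilon>^2 / (G + \<sigma>)^2) * eta_star G \<sigma> lam Cx \<epsilon>"
proof -
  define r where "r = \<epsilon>^2 / (G + \<sigma>)^2"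
  define \<eta> where "\<eta> = eta_star G \<sigma> lam Cx \<epsilon>"
  have r0: "r > 0" using h r_def by simp
  have "\<epsilon>^2 \<le> (7/2 * (G+\<sigma>))^2" using h by (intro power_mono) auto
  also have "(7/2 * (G+\<sigma>))^2 = 49/4 * (G+\<sigma>)^2" by (simp add: power2_eq_square algebra_simps)
  finally have "\<epsilon>^2 \<le> 49/4 * (G+\<sigma>)^2" .
  hence r1: "r \<le> 49/4" using h unfolding r_def by (simp add: field_simps)
  have z: "zeta_star G \<sigma> lam Cx \<epsilon> = (1 - r/49) / (1 + r/7)" using key(3) h r_def by simp
  have eta: "\<eta> > 0" using key(2) h \<eta>_def by simp
  have omz: "1 - zeta_star G \<sigma> lam Cx \<epsilon> = (8*r/49) / (1 + r/7)" unfolding z using r0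
    by (simp add: field_simps)
  have a: "1/20 * r \<le> 1 - zeta_star G \<sigma> lam Cx \<epsilon>" unfolding omz using r0 r1
    by (simp add: field_simps)
  have b: "1 - zeta_star G \<sigma> lam Cx \<epsilon> \<le> 1/6 * r" unfolding omz using r0 r1
    by (simp add: field_simps)
  have inv: "1 / (1 - zeta_star G \<sigma> lam Cx \<epsilon>) = 49 * (1 + r/7) / (8*r)" unfolding omz using r0
    by (simp add: field_simps)
  have c: "6 / r \<le> 1 / (1 - zeta_star G \<sigma> lam Cx \<epsilon>)" unfolding inv using r0 r1
    by (simp add: field_simps)
  have d: "1 / (1 - zeta_star G \<sigma> lam Cx \<epsilon>) \<le> 17 / r" unfolding inv using r0 r1
    by (simp add: field_simps)
  show ?thesis
    unfolding r_def[symmetric] \<eta>_def[symmetric]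
  proof (intro conjI allI impI)
    show "6 / r * \<eta> \<le> \<eta> / (1 - zeta_star G \<sigma> lam Cx \<epsilon>)"
      using mult_right_mono[OF c, of \<eta>] eta by simp
    show "\<eta> / (1 - zeta_star G \<sigma> lam Cx \<epsilon>) \<le> 17 / r * \<eta>"
      using mult_right_mono[OF d, of \<eta>] eta by simp
  qed (use a b in auto)
qed

theorem proposition3:
  shows "\<exists>c1 c2 c3 c4 :: real. 0 < c1 \<and> 0 < c2 \<and> 0 < c3 \<and> 0 < c4 \<and>
    (\<forall>G \<sigma> lam Cx \<epsilon> :: real.
       0 \<le> G \<and> 0 \<le> \<sigma> \<and> 0 < G + \<sigma> \<and> 0 < lam \<and> 0 \<le> Cx \<and> 0 < \<epsilon> \<and>
       \<epsilon> \<le> 7/2 * (G + \<sigma>) \<longrightarrow>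
       (let \<zeta> = zeta_star G \<sigma> lam Cx \<epsilon>; \<eta> = eta_star G \<sigma> lam Cx \<epsilon>;
            r = \<epsilon>^2 / (G + \<sigma>)^2 in
         c1 * r \<le> 1 - \<zeta> \<and> 1 - \<zeta> \<le> c2 * r \<and>
         (\<forall>\<kappa>. \<zeta> \<le> \<kappa> \<and> \<kappa> \<le> 1 \<longrightarrow> 1 - c2 * r \<le> \<kappa> \<and> \<kappa> \<le> 1) \<and>
         c3 / r * \<eta> \<le> \<eta> / (1 - \<zeta>) \<and> \<eta> / (1 - \<zeta>) \<le> c4 / r * \<eta>))"
  apply (rule exI[of _ "1/20"], rule exI[of _ "1/6"], rule exI[of _ 6], rule exI[of _ 17])
  unfolding Let_def
  apply (intro conjI allI impI)
  using main by (simp_all only: zero_less_divide_iff zero_less_numeral zero_less_one) blast+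

end
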